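(* Let $n,k,d\in\mathbb N$ satisfy $n\ge 60k$ and $k\ge 4d$. Let $T$ be a tree with $n$ vertices and at most $n/(5d)$ leaves. Then $T$ contains either a $2d$-separated set of at least $n/(40k)$ leaves, or a collection of at least $n/(40k)$ vertex-disjoint bare paths each of length $k$.
   Context: A path with $\ell$ vertices has length $\ell-1$. A bare path in a tree $T$ is a path in $T$ all of whose interior vertices have degree exactly $2$ in $T$. A vertex set $Q$ is $k$-separated in $T$ if every two distinct vertices of $Q$ are at distance at least $k$ in $T$. *)

theory Defs
  imports Complex_Main
begin

definition graph :: "'a set \<Rightarrow> 'a set set \<Rightarrow> bool" where
  "graph V E \<longleftrightarrow> finite V \<and> (\<forall>e\<in>E. \<exists>u v. e = {u, v} \<and> u \<noteq> v \<and> u \<in> V \<and> v \<in> V)"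

definition adj :: "'a set set \<Rightarrow> 'a \<Rightarrow> 'a \<Rightarrow> bool" where
  "adj E u v \<longleftrightarrow> {u, v} \<in> E \<and> u \<noteq> v"

definition is_path :: "'a set \<Rightarrow> 'a set set \<Rightarrow> 'a list \<Rightarrow> bool" where
  "is_path V E p \<longleftrightarrow> p \<noteq> [] \<and> distinct p \<and> set p \<subseteq> V \<and>
     (\<forall>i. Suc i < length p \<longrightarrow> adj E (p ! i) (p ! Suc i))"

definition path_len :: "'a list \<Rightarrow> nat" where
  "path_len p = length p - 1"

definition is_cycle :: "'a set \<Rightarrow> 'a set set \<Rightarrow> 'a list \<Rightarrow> bool" where
  "is_cycle V E c \<longleftrightarrow> length c \<ge> 3 \<and> is_path V E c \<and> adj E (last c) (hd c)"

definition connected_graph :: "'a set \<Rightarrow> 'a set set \<Rightarrow> bool" where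
  "connected_graph V E \<longleftrightarrow>
     (\<forall>u\<in>V. \<forall>v\<in>V. \<exists>p. is_path V E p \<and> hd p = u \<and> last p = v)"

definition tree :: "'a set \<Rightarrow> 'a set set \<Rightarrow> bool" where
  "tree V E \<longleftrightarrow> graph V E \<and> V \<noteq> {} \<and> connected_graph V E \<and> (\<nexists>c. is_cycle V E c)"

definition degree :: "'a set set \<Rightarrow> 'a \<Rightarrow> nat" where
  "degree E v = card {e \<in> E. v \<in> e}"

definition leaves :: "'a set \<Rightarrow> 'a set set \<Rightarrow> 'a set" where
  "leaves V E = {v \<in> V. degree E v = 1}"

definition gdist :: "'a set \<Rightarrow> 'a set set \<Rightarrow> 'a \<Rightarrow> 'a \<Rightarrow> nat" where
  "gdist V E u v = (LEAST l. \<exists>p. is_path V E p \<and> hd p = u \<and> last p = v \<and> path_len p = l)"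

definition separated :: "'a set \<Rightarrow> 'a set set \<Rightarrow> nat \<Rightarrow> 'a set \<Rightarrow> bool" where
  "separated V E k Q \<longleftrightarrow> (\<forall>u\<in>Q. \<forall>v\<in>Q. u \<noteq> v \<longrightarrow> gdist V E u v \<ge> k)"

definition bare_path :: "'a set \<Rightarrow> 'a set set \<Rightarrow> 'a list \<Rightarrow> bool" where
  "bare_path V E p \<longleftrightarrow> is_path V E p \<and>
     (\<forall>i. 0 < i \<and> i < length p - 1 \<longrightarrow> degree E (p ! i) = 2)"

end

theory Submission
  imports Defs
begin


lemma is_path_succ:
  "is_path V E p \<longleftrightarrow> p \<noteq> [] \<and> distinct p \<and> set p \<subseteq> V \<and> successively (adj E) p"
  unfolding is_path_def successively_conv_nth by auto

lemma adj_sym: "adj E u v \<Longrightarrow> adj E v u"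
  unfolding adj_def by (auto simp: insert_commute)

lemma graph_adjV: "graph V E \<Longrightarrow> adj E u v \<Longrightarrow> u \<in> V \<and> v \<in> V"
  unfolding graph_def adj_def by (auto simp: doubleton_eq_iff)

lemma tree_adjV: "tree V E \<Longrightarrow> adj E u v \<Longrightarrow> u \<in> V \<and> v \<in> V"
proof -
  assume "tree V E" "adj E u v"
  moreover from \<open>tree V E\<close> have "graph V E" unfolding tree_def by simp
  ultimately show ?thesis using graph_adjV[of V E u v] by simp
qed

lemma last_take_Suc: "i < length p \<Longrightarrow> last (take (Suc i) p) = p ! i"
  by (simp add: take_Suc_conv_app_nth)

lemma is_path_take:
  assumes "is_path V E p" "0 < m" "m \<le> length p"
  shows "is_path V E (take m p)"
  using assms unfolding is_path_def
  by (auto dest: in_set_takeD)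

lemma gdist_path:
  assumes "tree V E" "u \<in> V" "v \<in> V"
  shows "\<exists>p. is_path V E p \<and> hd p = u \<and> last p = v \<and> path_len p = gdist V E u v"
proof -
  from assms obtain p where "is_path V E p \<and> hd p = u \<and> last p = v"
    unfolding tree_def connected_graph_def by blast
  then have ex: "\<exists>l p. is_path V E p \<and> hd p = u \<and> last p = v \<and> path_len p = l" by blast
  show ?thesis unfolding gdist_def by (rule LeastI_ex[OF ex])
qed

lemma gdist_le:
  assumes "is_path V E p" "hd p = u" "last p = v"
  shows "gdist V E u v \<le> path_len p"
  unfolding gdist_def by (rule Least_le) (use assms in blast)

lemma gdist_adj:
  assumes "tree V E" "r \<in> V" "u \<in> V" "adj E u v"
  shows "gdist V E r v \<le> Suc (gdist V E r u)"
proof -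
  have vV: "v \<in> V" using tree_adjV[OF assms(1) assms(4)] by simp
  have "\<exists>p. is_path V E p \<and> hd p = r \<and> last p = u \<and> path_len p = gdist V E r u"
    by (rule gdist_path[OF assms(1,2,3)])
  then obtain p where p: "is_path V E p" "hd p = r" "last p = u" "path_len p = gdist V E r u"
    by blast
  have pne: "p \<noteq> []" using p unfolding is_path_def by auto
  show ?thesis
  proof (cases "v \<in> set p")
    case False
    have "successively (adj E) (p @ [v])"
      using p(1) assms(4) p(3) pne unfolding is_path_succ successively_append_iff by simp
    then have "is_path V E (p @ [v])"
      using p(1) False vV unfolding is_path_succ by simp
    moreover have "hd (p @ [v]) = r" using p pne by simp
    moreover have "last (p @ [v]) = v" by simp
    ultimately have "gdist V E r v \<le> path_len (p @ [v])" by (rule gdist_le)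
    also have "\<dots> = Suc (path_len p)" using pne unfolding path_len_def by simp
    finally show ?thesis using p(4) by simp
  next
    case True
    then obtain i where i: "i < length p" "p ! i = v" by (metis in_set_conv_nth)
    have "is_path V E (take (Suc i) p)" using is_path_take[OF p(1)] i by simp
    moreover have "hd (take (Suc i) p) = r" using p pne by simp
    moreover have "last (take (Suc i) p) = v" using i by (simp add: last_take_Suc)
    ultimately have "gdist V E r v \<le> path_len (take (Suc i) p)" by (rule gdist_le)
    also have "\<dots> = i" using i unfolding path_len_def by simp
    finally have "gdist V E r v \<le> i" .
    moreover have "i \<le> path_len p" using i unfolding path_len_def by simp
    ultimately show ?thesis using p(4) by linarith
  qed
qed

lemma gdist_down:
  assumes "tree V E" "r \<in> V" "v \<in> V" "v \<noteq> r"
  shows "\<exists>u. adj E v u \<and> Suc (gdist V E r u) = gdist V E r v"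
proof -
  have "\<exists>p. is_path V E p \<and> hd p = r \<and> last p = v \<and> path_len p = gdist V E r v"
    by (rule gdist_path[OF assms(1,2,3)])
  then obtain p where p: "is_path V E p" "hd p = r" "last p = v" "path_len p = gdist V E r v"
    by blast
  have pne: "p \<noteq> []" using p unfolding is_path_def by auto
  have len: "length p \<ge> 2"
  proof (rule ccontr)
    assume "\<not> length p \<ge> 2"
    moreover have "length p \<noteq> 0" using pne by simp
    ultimately have l1: "length p = 1" by linarith
    have "hd p = p ! 0" using pne by (simp add: hd_conv_nth)
    moreover have "last p = p ! 0" using pne l1 by (simp add: last_conv_nth)
    ultimately have "hd p = last p" by simp
    then show False using p(2,3) assms(4) by simp
  qed
  define u where "u = p ! (length p - 2)"
  have adj1: "adj E u v"
  proof -
    have "Suc (length p - 2) < length p" using len by simp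
    then have "adj E (p ! (length p - 2)) (p ! Suc (length p - 2))"
      using p(1) unfolding is_path_def by blast
    moreover have "Suc (length p - 2) = length p - 1" using len by simp
    moreover have "p ! (length p - 1) = v" using p(3) pne by (simp add: last_conv_nth)
    ultimately show ?thesis unfolding u_def by simp
  qed
  have uV: "u \<in> V" using tree_adjV[OF assms(1) adj1] by simp
  have "is_path V E (take (length p - 1) p)" using is_path_take[OF p(1)] len by simp
  moreover have "hd (take (length p - 1) p) = r" using p(2) len by simp
  moreover have "last (take (length p - 1) p) = u" unfolding u_def using len
    last_take_Suc[of "length p - 2" p] by (simp add: Suc_diff_Suc numeral_2_eq_2)
  ultimately have "gdist V E r u \<le> path_len (take (length p - 1) p)" by (rule gdist_le)
  also have "\<dots> = length p - 2" unfolding path_len_def using len by simp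
  finally have a: "gdist V E r u \<le> length p - 2" .
  have b: "gdist V E r v \<le> Suc (gdist V E r u)" using gdist_adj[OF assms(1,2) uV adj1] .
  have "Suc (gdist V E r u) = gdist V E r v" using a b p(4) len unfolding path_len_def by linarith
  then show ?thesis using adj_sym[OF adj1] by blast
qed



locale rpre =
  fixes V :: "'a set" and E :: "'a set set" and r :: 'a and par :: "'a \<Rightarrow> 'a" and dep :: "'a \<Rightarrow> nat"
  assumes finV: "finite V" and rV: "r \<in> V" and par_r: "par r = r" and dep_r: "dep r = 0"
    and parV: "v \<in> V \<Longrightarrow> par v \<in> V"
    and par_adj: "v \<in> V \<Longrightarrow> v \<noteq> r \<Longrightarrow> adj E v (par v)"
    and dep_par: "v \<in> V \<Longrightarrow> v \<noteq> r \<Longrightarrow> dep v = Suc (dep (par v))"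
    and dep_adj: "adj E u v \<Longrightarrow> u \<in> V \<Longrightarrow> dep v \<le> Suc (dep u)"
    and adjV: "adj E u v \<Longrightarrow> u \<in> V \<and> v \<in> V"
begin

lemma dep0: "v \<in> V \<Longrightarrow> dep v = 0 \<Longrightarrow> v = r"
  using dep_par by fastforce

lemma fpV: "v \<in> V \<Longrightarrow> (par ^^ m) v \<in> V"
  by (induction m) (auto simp: parV)

lemma fp_dep: "v \<in> V \<Longrightarrow> dep ((par ^^ m) v) = dep v - m"
proof (induction m)
  case 0 then show ?case by simp
next
  case (Suc m)
  show ?case
  proof (cases "(par ^^ m) v = r")
    case True
    then show ?thesis using Suc par_r dep_r by simp
  next
    case False
    then show ?thesis using Suc dep_par[OF fpV[OF Suc.prems] False] by simp
  qed
qed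

lemma fp_r: "v \<in> V \<Longrightarrow> dep v \<le> m \<Longrightarrow> (par ^^ m) v = r"
  using dep0[OF fpV] fp_dep by simp

lemma fp_ne_r: "v \<in> V \<Longrightarrow> m < dep v \<Longrightarrow> (par ^^ m) v \<noteq> r"
  using fp_dep dep_r by fastforce

lemma fp_adj: "v \<in> V \<Longrightarrow> m < dep v \<Longrightarrow> adj E ((par ^^ m) v) ((par ^^ Suc m) v)"
  using par_adj[OF fpV fp_ne_r] by simp

lemma cyc:
  assumes xV: "x \<in> V" and zV: "z \<in> V" and xz: "x \<noteq> z" and dxz: "dep x = dep z"
    and dcs: "distinct cs" and cV: "set cs \<subseteq> V" and cdep: "\<forall>c\<in>set cs. dep x < dep c"
    and ch: "successively (adj E) (z # cs @ [x])"
  shows "\<exists>c. is_cycle V E c"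
proof -
  define P where "P i \<longleftrightarrow> (par ^^ i) x = (par ^^ i) z" for i
  have ex: "P (dep x)" unfolding P_def using fp_r[OF xV] fp_r[OF zV] dxz by simp
  define i where "i = (LEAST i. P i)"
  have Pi: "P i" unfolding i_def by (rule LeastI[of P, OF ex])
  have ile: "i \<le> dep x" unfolding i_def by (rule Least_le[of P, OF ex])
  have notP: "\<not> P m" if "m < i" for m using not_less_Least[of m P] that unfolding i_def by blast
  have i0: "i \<noteq> 0" using Pi xz unfolding P_def by (cases i) auto
  define f where "f m = (if m \<le> i then (par ^^ m) x else (par ^^ (2*i - m)) z)" for m
  have fV: "f m \<in> V" for m unfolding f_def using fpV xV zV by simp
  have fdep: "dep (f m) = (if m \<le> i then dep x - m else dep x - (2*i - m))" for m
    unfolding f_def using fp_dep xV zV dxz by simp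
  have fdle: "dep (f m) \<le> dep x" for m using fdep[of m] by simp
  have f_alt: "f m = (par ^^ (2*i - m)) z" if "i \<le> m" for m
  proof (cases "m = i")
    case True
    then show ?thesis using Pi unfolding f_def P_def by simp
  qed (use that in \<open>simp add: f_def\<close>)
  have inj: "inj_on f {0..<2*i+1}"
  proof (rule inj_onI)
    fix a b assume a: "a \<in> {0..<2*i+1}" and b: "b \<in> {0..<2*i+1}" and fab: "f a = f b"
    have dab: "dep (f a) = dep (f b)" using fab by simp
    show "a = b"
    proof (cases "a \<le> i")
      case True
      note aT = True
      show ?thesis
      proof (cases "b \<le> i")
        case True
        then show ?thesis using aT dab fdep ile by simp
      next
        case False
        then have "a = 2*i - b" using aT dab fdep[of a] fdep[of b] ile a b by simp
        moreover have "a < i" using False b \<open>a = 2*i - b\<close> by simp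
        moreover have "(par ^^ a) x = (par ^^ (2*i - b)) z" using fab aT False unfolding f_def by simp
        ultimately show ?thesis using notP unfolding P_def by simp
      qed
    next
      case False
      note aF = False
      show ?thesis
      proof (cases "b \<le> i")
        case True
        then have "b = 2*i - a" using aF dab fdep[of a] fdep[of b] ile a b by simp
        moreover have "b < i" using aF a \<open>b = 2*i - a\<close> by simp
        moreover have "(par ^^ b) x = (par ^^ (2*i - a)) z" using fab aF True unfolding f_def by simp
        ultimately show ?thesis using notP unfolding P_def by simp
      next
        case False
        then show ?thesis using aF dab fdep[of a] fdep[of b] ile a b by simp
      qed
    qed
  qed
  define L where "L = map f [0..<2*i+1]"
  have Lne: "L \<noteq> []" unfolding L_def by simp
  have hdL: "hd L = x" unfolding L_def f_def by (simp add: hd_map)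
  have lastL: "last L = z" unfolding L_def using f_alt[of "2*i"] by (simp add: last_map)
  have lenL: "length L = 2*i+1" unfolding L_def by simp
  have Lnth: "L ! m = f m" if "m < 2*i+1" for m
    unfolding L_def using that by (simp del: upt_Suc)
  have "\<forall>j. Suc j < length L \<longrightarrow> adj E (L ! j) (L ! Suc j)"
  proof (intro allI impI)
    fix j assume j: "Suc j < length L"
    then have j': "Suc j < 2*i+1" using lenL by simp
    have nj: "L ! j = f j" "L ! Suc j = f (Suc j)" using j' Lnth by simp_all
    show "adj E (L ! j) (L ! Suc j)"
    proof (cases "j < i")
      case True
      then have "f j = (par ^^ j) x" "f (Suc j) = (par ^^ Suc j) x" unfolding f_def by auto
      moreover have "adj E ((par ^^ j) x) ((par ^^ Suc j) x)" using fp_adj[OF xV] True ile by simp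
      ultimately show ?thesis unfolding nj by (simp del: funpow.simps)
    next
      case False
      define t where "t = 2*i - Suc j"
      have t: "t < dep z" using False j' ile dxz unfolding t_def by simp
      have "f j = (par ^^ Suc t) z" using f_alt[of j] False j' unfolding t_def
        by (simp add: Suc_diff_Suc)
      moreover have "f (Suc j) = (par ^^ t) z" using f_alt[of "Suc j"] False unfolding t_def by simp
      moreover have "adj E ((par ^^ Suc t) z) ((par ^^ t) z)" using adj_sym[OF fp_adj[OF zV t]] .
      ultimately show ?thesis unfolding nj by (simp del: funpow.simps)
    qed
  qed
  then have chL: "successively (adj E) L" unfolding successively_conv_nth .
  have ch2: "successively (adj E) (z # cs) \<and> adj E (last (z # cs)) x"
    using ch unfolding append_Cons[symmetric] successively_append_iff by simp
  define c where "c = L @ cs"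
  have chc: "successively (adj E) c"
    unfolding c_def successively_append_iff
    using chL ch2 lastL Lne by (auto simp: successively_Cons)
  have close: "adj E (last c) (hd c)"
    using ch2 hdL lastL Lne unfolding c_def by (cases "cs = []") auto
  have dL: "distinct L" unfolding L_def using inj by (simp only: distinct_map distinct_upt set_upt)
  have disj: "set L \<inter> set cs = {}"
  proof -
    have "\<forall>y\<in>set L. dep y \<le> dep x" unfolding L_def using fdle by auto
    then show ?thesis using cdep by fastforce
  qed
  have LV: "set L \<subseteq> V" unfolding L_def using fV by auto
  have "length c \<ge> 3" unfolding c_def L_def using i0 by simp
  moreover have "is_path V E c"
    unfolding is_path_succ c_def using Lne dL dcs disj LV cV chc[unfolded c_def] by auto
  ultimately have "is_cycle V E c" unfolding is_cycle_def using close by simp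
  then show ?thesis by blast
qed

lemma edges_ord:
  assumes nc: "\<not> (\<exists>c. is_cycle V E c)" and ab: "adj E a b" and le: "dep a \<le> dep b"
  shows "\<exists>v\<in>V. v \<noteq> r \<and> {a, b} = {v, par v}"
proof -
  have aV: "a \<in> V" and bV: "b \<in> V" using adjV[OF ab] by auto
  have "dep b \<le> Suc (dep a)" using dep_adj[OF ab aV] .
  then consider "dep b = Suc (dep a)" | "dep b = dep a" using le by linarith
  then show ?thesis
  proof cases
    case 1
    then have br: "b \<noteq> r" using dep_r by auto
    define z where "z = par b"
    have zV: "z \<in> V" unfolding z_def using parV[OF bV] .
    have dz: "dep a = dep z" using dep_par[OF bV br] 1 unfolding z_def by simp
    show ?thesis
    proof (cases "z = a")
      case True
      then show ?thesis using bV br unfolding z_def by (auto simp: insert_commute)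
    next
      case False
      have "successively (adj E) (z # [b] @ [a])"
        using adj_sym[OF par_adj[OF bV br]] adj_sym[OF ab] unfolding z_def by simp
      then have "\<exists>c. is_cycle V E c"
        using cyc[OF aV zV _ dz, of "[b]"] False 1 bV by auto
      then show ?thesis using nc by blast
    qed
  next
    case 2
    have "a \<noteq> b" using ab unfolding adj_def by simp
    moreover have "successively (adj E) (b # [] @ [a])" using adj_sym[OF ab] by simp
    ultimately have "\<exists>c. is_cycle V E c" using cyc[OF aV bV _ _, of "[]"] 2 by auto
    then show ?thesis using nc by blast
  qed
qed

lemma edges_from_tree:
  assumes nc: "\<not> (\<exists>c. is_cycle V E c)" and g: "graph V E" and e: "e \<in> E"
  shows "\<exists>v\<in>V. v \<noteq> r \<and> e = {v, par v}"
proof -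
  obtain a b where eab: "e = {a, b}" "a \<noteq> b" using g e unfolding graph_def by blast
  then have ab: "adj E a b" and ba: "adj E b a" using e unfolding adj_def by (auto simp: insert_commute)
  show ?thesis
  proof (cases "dep a \<le> dep b")
    case True
    then show ?thesis using edges_ord[OF nc ab] eab by simp
  next
    case False
    then show ?thesis using edges_ord[OF nc ba] eab by (simp add: insert_commute)
  qed
qed

end

locale rtree = rpre +
  assumes edges: "e \<in> E \<Longrightarrow> \<exists>v\<in>V. v \<noteq> r \<and> e = {v, par v}"

lemma rooted_exists:
  assumes T: "tree V E" and rV: "r \<in> V"
  shows "\<exists>par dep. rtree V E r par dep"
proof -
  define dep where "dep = gdist V E r"
  define par where "par v = (if v = r then r else SOME u. adj E v u \<and> Suc (dep u) = dep v)" for v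
  have pv: "adj E v (par v) \<and> Suc (dep (par v)) = dep v" if "v \<in> V" "v \<noteq> r" for v
  proof -
    have ex: "\<exists>u. adj E v u \<and> Suc (dep u) = dep v" using gdist_down[OF T rV that] unfolding dep_def .
    show ?thesis unfolding par_def using that(2) someI_ex[OF ex] by simp
  qed
  have g: "graph V E" using T unfolding tree_def by simp
  have d0: "dep r = 0"
  proof -
    have "is_path V E [r]" using rV unfolding is_path_def by simp
    then have "gdist V E r r \<le> path_len [r]" by (rule gdist_le) simp_all
    then show ?thesis unfolding dep_def path_len_def by simp
  qed
  have pre: "rpre V E r par dep"
  proof
    show "finite V" using g unfolding graph_def by simp
    show "r \<in> V" by (rule rV)
    show "par r = r" unfolding par_def by simp
    show "dep r = 0" by (rule d0)
    show "par v \<in> V" if "v \<in> V" for v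
      using that pv[of v] tree_adjV[OF T] rV unfolding par_def by (cases "v = r") auto
    show "adj E v (par v)" if "v \<in> V" "v \<noteq> r" for v using pv[OF that] by simp
    show "dep v = Suc (dep (par v))" if "v \<in> V" "v \<noteq> r" for v using pv[OF that] by simp
    show "dep v \<le> Suc (dep u)" if "adj E u v" "u \<in> V" for u v
      using gdist_adj[OF T rV that(2,1)] unfolding dep_def .
    show "u \<in> V \<and> v \<in> V" if "adj E u v" for u v using tree_adjV[OF T that] .
  qed
  have "rtree V E r par dep"
  proof (rule rtree.intro[OF pre], unfold_locales)
    fix e assume "e \<in> E"
    then show "\<exists>v\<in>V. v \<noteq> r \<and> e = {v, par v}"
      using rpre.edges_from_tree[OF pre _ g] T unfolding tree_def by blast
  qed
  then show ?thesis by blast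
qed



context rtree
begin

definition ch :: "'a \<Rightarrow> 'a set" where "ch x = {c \<in> V. c \<noteq> r \<and> par c = x}"
definition D :: "'a \<Rightarrow> 'a set" where "D x = {y \<in> V. \<exists>j. (par ^^ j) y = x}"
definition tdist :: "'a \<Rightarrow> 'a \<Rightarrow> nat" where
  "tdist u v = (LEAST m. \<exists>i j. i + j = m \<and> (par ^^ i) u = (par ^^ j) v)"

lemma fin_ch: "finite (ch x)" unfolding ch_def using finV by simp

lemma par_ne: "v \<in> V \<Longrightarrow> v \<noteq> r \<Longrightarrow> par v \<noteq> v"
  using dep_par by fastforce

lemma degree_eq:
  assumes vV: "v \<in> V"
  shows "degree E v = (if v = r then 0 else 1) + card (ch v)"
proof -
  define S where "S = (\<lambda>c. {c, par c}) ` ch v"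
  define T where "T = (if v = r then {} else {{v, par v}})"
  have eq: "{e \<in> E. v \<in> e} = T \<union> S"
  proof
    show "{e \<in> E. v \<in> e} \<subseteq> T \<union> S"
    proof
      fix e assume e: "e \<in> {e \<in> E. v \<in> e}"
      then obtain x where x: "x \<in> V" "x \<noteq> r" "e = {x, par x}" using edges by blast
      have "v = x \<or> v = par x" using e x by auto
      then show "e \<in> T \<union> S"
      proof
        assume "v = x" then show ?thesis using x unfolding T_def by auto
      next
        assume "v = par x" then have "x \<in> ch v" using x unfolding ch_def by simp
        then show ?thesis using x unfolding S_def by auto
      qed
    qed
  next
    show "T \<union> S \<subseteq> {e \<in> E. v \<in> e}"
    proof
      fix e assume "e \<in> T \<union> S"
      then consider "v \<noteq> r" "e = {v, par v}" | c where "c \<in> ch v" "e = {c, par c}"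
        unfolding T_def S_def by (auto split: if_splits)
      then show "e \<in> {e \<in> E. v \<in> e}"
      proof cases
        case 1 then show ?thesis using par_adj[OF vV] unfolding adj_def by simp
      next
        case 2 then show ?thesis using par_adj unfolding adj_def ch_def by auto
      qed
    qed
  qed
  have injS: "inj_on (\<lambda>c. {c, par c}) (ch v)"
  proof (rule inj_onI)
    fix a b assume a: "a \<in> ch v" and b: "b \<in> ch v" and ab: "{a, par a} = {b, par b}"
    have a1: "a \<in> V" "a \<noteq> r" "par a = v" and b1: "b \<in> V" "b \<noteq> r" "par b = v"
      using a b unfolding ch_def by auto
    have "a \<noteq> v" using par_ne[OF a1(1,2)] a1(3) by simp
    moreover have "b \<noteq> v" using par_ne[OF b1(1,2)] b1(3) by simp
    ultimately have "par a = v" "par b = v" "a \<noteq> v" "b \<noteq> v" using a1 b1 by auto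
    then show "a = b" using ab by (auto simp: doubleton_eq_iff)
  qed
  have cS: "card S = card (ch v)" unfolding S_def using card_image[OF injS] .
  have disj: "T \<inter> S = {}"
  proof -
    have "{v, par v} \<noteq> {c, par c}" if "v \<noteq> r" "c \<in> ch v" for c
    proof
      assume h: "{v, par v} = {c, par c}"
      have pc: "par c = v" "c \<in> V" "c \<noteq> r" using that(2) unfolding ch_def by auto
      have "c \<noteq> v" using par_ne[OF pc(2,3)] pc by simp
      then have "c = par v" using h pc by (auto simp: doubleton_eq_iff)
      then have "dep v = Suc (dep c)" using dep_par[OF vV that(1)] by simp
      moreover have "dep c = Suc (dep v)" using dep_par[OF pc(2,3)] pc by simp
      ultimately show False by simp
    qed
    then show ?thesis unfolding T_def S_def by auto
  qed
  have fS: "finite S" unfolding S_def using fin_ch by simp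
  have "card (T \<union> S) = card T + card S"
    using disj fS by (intro card_Un_disjoint) (auto simp: T_def)
  then show ?thesis unfolding degree_def eq cS T_def by simp
qed

lemma D_canon:
  assumes "y \<in> D x"
  shows "x \<in> V \<and> y \<in> V \<and> dep x \<le> dep y \<and> (par ^^ (dep y - dep x)) y = x"
proof -
  obtain j where yV: "y \<in> V" and j: "(par ^^ j) y = x" using assms unfolding D_def by blast
  have xV: "x \<in> V" using fpV[OF yV] j by blast
  have dx: "dep x = dep y - j" using fp_dep[OF yV, of j] j by simp
  show ?thesis
  proof (cases "j \<le> dep y")
    case True
    then show ?thesis using xV yV dx j by simp
  next
    case False
    then have "x = r" using fp_r[OF yV] j by simp
    then show ?thesis using xV yV dep_r fp_r[OF yV] by simp
  qed
qed

lemma D_self: "x \<in> V \<Longrightarrow> x \<in> D x"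
  unfolding D_def by (auto intro: exI[of _ 0])

lemma D_trans: "y \<in> D x \<Longrightarrow> x \<in> D w \<Longrightarrow> y \<in> D w"
  unfolding D_def by (auto simp: funpow_add[symmetric] comp_def) (metis funpow_add comp_apply)

lemma D_fp: "y \<in> V \<Longrightarrow> y \<in> D ((par ^^ j) y)"
  unfolding D_def by auto

lemma D_par: "y \<in> D x \<Longrightarrow> y \<in> D (par x)"
proof -
  assume "y \<in> D x"
  then obtain j where "y \<in> V" "(par ^^ j) y = x" unfolding D_def by blast
  then have "(par ^^ Suc j) y = par x" by simp
  then show ?thesis using \<open>y \<in> V\<close> unfolding D_def by blast
qed

lemma D_child:
  assumes "y \<in> D x" "y \<noteq> x"
  shows "\<exists>c\<in>ch x. y \<in> D c"
proof -
  have c: "x \<in> V" "y \<in> V" "dep x \<le> dep y" "(par ^^ (dep y - dep x)) y = x" using D_canon[OF assms(1)] by auto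
  define j where "j = dep y - dep x"
  have j0: "j \<noteq> 0" using c assms(2) unfolding j_def by auto
  define cc where "cc = (par ^^ (j - 1)) y"
  have ccV: "cc \<in> V" unfolding cc_def using fpV[OF c(2)] .
  have dcc: "dep cc = Suc (dep x)" unfolding cc_def using fp_dep[OF c(2)] j0 c(3) unfolding j_def by simp
  have pcc: "par cc = x" unfolding cc_def using c(4) j0 unfolding j_def
    by (metis Suc_pred' funpow.simps(2) neq0_conv o_apply)
  have "cc \<noteq> r" using dcc dep_r by auto
  then have "cc \<in> ch x" using ccV pcc unfolding ch_def by simp
  moreover have "y \<in> D cc" unfolding cc_def using D_fp[OF c(2)] .
  ultimately show ?thesis by blast
qed

lemma D_deepest:
  assumes xV: "x \<in> V" and xr: "x \<noteq> r"
  shows "\<exists>l\<in>D x. l \<noteq> r \<and> ch l = {}"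
proof -
  have fin: "finite (D x)" unfolding D_def using finV by simp
  have ne: "D x \<noteq> {}" using D_self[OF xV] by blast
  define m where "m = Max (dep ` D x)"
  have "m \<in> dep ` D x" unfolding m_def using fin ne by simp
  then obtain l where l: "l \<in> D x" "dep l = m" by blast
  have mx: "dep y \<le> m" if "y \<in> D x" for y unfolding m_def using fin that by simp
  have lr: "l \<noteq> r"
  proof
    assume "l = r"
    then obtain j where "(par ^^ j) r = x" using l unfolding D_def by blast
    moreover have "(par ^^ j) r = r" using fp_r[OF rV] dep_r by simp
    ultimately show False using xr by simp
  qed
  have "ch l = {}"
  proof (rule ccontr)
    assume "ch l \<noteq> {}"
    then obtain c where c: "c \<in> V" "c \<noteq> r" "par c = l" unfolding ch_def by blast
    have "c \<in> D l" using D_fp[OF c(1), of 1] c by simp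
    then have "c \<in> D x" using D_trans l by blast
    moreover have "dep c = Suc (dep l)" using dep_par[OF c(1,2)] c by simp
    ultimately show False using mx l by fastforce
  qed
  then show ?thesis using l lr by blast
qed

subsection \<open>Tree distance\<close>

lemma tdist_ex: "u \<in> V \<Longrightarrow> v \<in> V \<Longrightarrow> \<exists>m i j. i + j = m \<and> (par ^^ i) u = (par ^^ j) v"
  using fp_r[OF _ order_refl] by metis

lemma tdist_le: "(par ^^ i) u = (par ^^ j) v \<Longrightarrow> tdist u v \<le> i + j"
  unfolding tdist_def by (rule Least_le) blast

lemma tdist_wit:
  assumes uV: "u \<in> V" and vV: "v \<in> V"
  shows "\<exists>i j. i + j = tdist u v \<and> (par ^^ i) u = (par ^^ j) v \<and> i \<le> dep u \<and> j \<le> dep v"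
proof -
  obtain i j where ij: "i + j = tdist u v" "(par ^^ i) u = (par ^^ j) v"
    using LeastI_ex[OF tdist_ex[OF uV vV]] unfolding tdist_def by blast
  have "i \<le> dep u"
  proof (rule ccontr)
    assume "\<not> i \<le> dep u"
    then have "(par ^^ i) u = r" "(par ^^ dep u) u = r" using fp_r[OF uV] by auto
    then have "tdist u v \<le> dep u + j" using tdist_le ij(2) by metis
    then show False using ij(1) \<open>\<not> i \<le> dep u\<close> by simp
  qed
  moreover have "j \<le> dep v"
  proof (rule ccontr)
    assume "\<not> j \<le> dep v"
    then have "(par ^^ j) v = r" "(par ^^ dep v) v = r" using fp_r[OF vV] by auto
    then have "tdist u v \<le> i + dep v" using tdist_le ij(2) by metis
    then show False using ij(1) \<open>\<not> j \<le> dep v\<close> by simp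
  qed
  ultimately show ?thesis using ij by blast
qed

lemma tdist_sym: "tdist u v = tdist v u"
  unfolding tdist_def by (metis add.commute)

lemma tdist_step:
  assumes uV: "u \<in> V" and a: "adj E x y"
  shows "tdist u y \<le> Suc (tdist u x)"
proof -
  have xV: "x \<in> V" and yV: "y \<in> V" using adjV[OF a] by auto
  obtain i j where ij: "i + j = tdist u x" "(par ^^ i) u = (par ^^ j) x"
    using tdist_wit[OF uV xV] by blast
  have "{x, y} \<in> E" using a unfolding adj_def by simp
  then obtain w where w: "w \<in> V" "w \<noteq> r" "{x, y} = {w, par w}" using edges by blast
  have "x \<noteq> y" using a unfolding adj_def by simp
  then consider "x = w" "y = par w" | "y = w" "x = par w" using w(3) by (auto simp: doubleton_eq_iff)
  then show ?thesis
  proof cases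
    case 1
    show ?thesis
    proof (cases j)
      case 0
      then have "(par ^^ Suc i) u = (par ^^ 0) y" using ij(2) 1 by simp
      then show ?thesis using tdist_le[of "Suc i" u 0 y] ij(1) 0 by simp
    next
      case (Suc j')
      then have "(par ^^ i) u = (par ^^ j') y" using ij(2) 1 by (simp add: funpow_Suc_right del: funpow.simps)
      then show ?thesis using tdist_le[of i u j' y] ij(1) Suc by simp
    qed
  next
    case 2
    then have "(par ^^ i) u = (par ^^ Suc j) y" using ij(2) by (simp add: funpow_Suc_right del: funpow.simps)
    then show ?thesis using tdist_le[of i u "Suc j" y] ij(1) by simp
  qed
qed

lemma tdist_path:
  assumes p: "is_path V E p"
  shows "tdist (hd p) (last p) \<le> path_len p"
proof -
  have pne: "p \<noteq> []" and pV: "set p \<subseteq> V" using p unfolding is_path_def by auto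
  have huV: "hd p \<in> V" using pne pV by (simp add: subset_code(1))
  have "m < length p \<Longrightarrow> tdist (hd p) (p ! m) \<le> m" for m
  proof (induction m)
    case 0
    have "tdist (hd p) (p ! 0) \<le> 0 + 0" using tdist_le[of 0 "hd p" 0 "p ! 0"] pne by (simp add: hd_conv_nth)
    then show ?case by simp
  next
    case (Suc m)
    have "adj E (p ! m) (p ! Suc m)" using p Suc.prems unfolding is_path_def by blast
    then have "tdist (hd p) (p ! Suc m) \<le> Suc (tdist (hd p) (p ! m))" using tdist_step[OF huV] by blast
    then show ?case using Suc by simp
  qed
  then show ?thesis using pne unfolding path_len_def by (simp add: last_conv_nth)
qed

lemma tdist_gdist:
  assumes T: "tree V E" and uV: "u \<in> V" and vV: "v \<in> V"
  shows "tdist u v \<le> gdist V E u v"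
proof -
  obtain p where p: "is_path V E p" "hd p = u" "last p = v" "path_len p = gdist V E u v"
    using gdist_path[OF T uV vV] by blast
  show ?thesis using tdist_path[OF p(1)] p by simp
qed

end



context rtree
begin

lemma fpS: "(par ^^ m) (par u) = (par ^^ Suc m) u"
  by (simp add: funpow_swap1)

lemma line_unique:
  assumes X: "\<forall>x\<in>X. \<forall>c1 c2. c1 \<in> ch x \<and> c2 \<in> ch x \<and> P c1 \<and> P c2 \<longrightarrow> c1 = c2"
  shows "u1 \<in> V \<Longrightarrow> u2 \<in> V \<Longrightarrow> (par ^^ t) u1 = (par ^^ t) u2
    \<Longrightarrow> \<forall>m\<le>t. (par ^^ m) u1 \<noteq> r \<and> P ((par ^^ m) u1)
    \<Longrightarrow> \<forall>m\<le>t. (par ^^ m) u2 \<noteq> r \<and> P ((par ^^ m) u2)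
    \<Longrightarrow> \<forall>m. 1 \<le> m \<and> m \<le> t \<longrightarrow> (par ^^ m) u1 \<in> X \<and> (par ^^ m) u2 \<in> X
    \<Longrightarrow> u1 = u2"
proof (induction t arbitrary: u1 u2)
  case 0
  then show ?case by simp
next
  case (Suc t)
  have "par u1 = par u2"
  proof (rule Suc.IH)
    show "par u1 \<in> V" "par u2 \<in> V" using parV Suc.prems by auto
    show "(par ^^ t) (par u1) = (par ^^ t) (par u2)"
      unfolding fpS using Suc.prems(3) by simp
    show "\<forall>m\<le>t. (par ^^ m) (par u1) \<noteq> r \<and> P ((par ^^ m) (par u1))"
      unfolding fpS using Suc.prems(4) by auto
    show "\<forall>m\<le>t. (par ^^ m) (par u2) \<noteq> r \<and> P ((par ^^ m) (par u2))"
      unfolding fpS using Suc.prems(5) by auto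
    show "\<forall>m. 1 \<le> m \<and> m \<le> t \<longrightarrow> (par ^^ m) (par u1) \<in> X \<and> (par ^^ m) (par u2) \<in> X"
      unfolding fpS using Suc.prems(6) by auto
  qed
  moreover have "par u1 \<in> X" using Suc.prems(6)[rule_format, of 1] by simp
  moreover have "u1 \<in> ch (par u1)" using Suc.prems(1,4) unfolding ch_def by force
  moreover have "u2 \<in> ch (par u1)" using Suc.prems(2,5) \<open>par u1 = par u2\<close> unfolding ch_def by force
  moreover have "P u1" "P u2" using Suc.prems(4,5) by (metis funpow_0 le0)+
  ultimately show ?case using X by blast
qed

lemma card1_eq: "card S = 1 \<Longrightarrow> a \<in> S \<Longrightarrow> b \<in> S \<Longrightarrow> a = b"
  by (metis card_1_singletonE singletonD)

lemma tdist_exit: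
  assumes lD: "l \<in> D w" and qV: "q \<in> V" and qD: "q \<notin> D w"
  shows "dep l - dep w < tdist l q"
proof -
  have c: "w \<in> V" "l \<in> V" "dep w \<le> dep l" "(par ^^ (dep l - dep w)) l = w" using D_canon[OF lD] by auto
  obtain i j where ij: "i + j = tdist l q" "(par ^^ i) l = (par ^^ j) q" using tdist_wit[OF c(2) qV] by blast
  show ?thesis
  proof (rule ccontr)
    assume "\<not> ?thesis"
    then have ile: "i \<le> dep l - dep w" using ij by simp
    have "(par ^^ (dep l - dep w - i)) ((par ^^ i) l) = w"
      using c(4) ile by (metis funpow_add le_add_diff_inverse2 o_apply)
    then have "(par ^^ i) l \<in> D w" using fpV[OF c(2)] unfolding D_def by blast
    moreover have "q \<in> D ((par ^^ i) l)" using D_fp[OF qV, of j] ij(2) by simp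
    ultimately show False using D_trans qD by blast
  qed
qed

lemma meet_children:
  assumes uV: "u \<in> V" and vV: "v \<in> V" and ij: "i + j = tdist u v" "(par ^^ i) u = (par ^^ j) v"
    and i1: "1 \<le> i" and j1: "1 \<le> j"
  shows "(par ^^ (i - 1)) u \<noteq> (par ^^ (j - 1)) v \<and> (par ^^ (i - 1)) u \<in> ch ((par ^^ i) u)
     \<and> (par ^^ (j - 1)) v \<in> ch ((par ^^ i) u)"
proof -
  have pi: "par ((par ^^ (i - 1)) u) = (par ^^ i) u" using i1 by (metis Suc_diff_le diff_Suc_1 funpow.simps(2) o_apply)
  have pj: "par ((par ^^ (j - 1)) v) = (par ^^ j) v" using j1 by (metis Suc_diff_le diff_Suc_1 funpow.simps(2) o_apply)
  have ne: "(par ^^ (i - 1)) u \<noteq> (par ^^ (j - 1)) v"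
  proof
    assume "(par ^^ (i - 1)) u = (par ^^ (j - 1)) v"
    then have "tdist u v \<le> (i - 1) + (j - 1)" by (rule tdist_le)
    then show False using ij i1 j1 by simp
  qed
  have r1: "(par ^^ (i - 1)) u \<noteq> r"
  proof
    assume h: "(par ^^ (i - 1)) u = r"
    then have "(par ^^ i) u = r" using pi par_r by simp
    then have "(par ^^ (i - 1)) u = (par ^^ j) v" using h ij(2) by simp
    then have "tdist u v \<le> (i - 1) + j" by (rule tdist_le)
    then show False using ij i1 by simp
  qed
  have r2: "(par ^^ (j - 1)) v \<noteq> r"
  proof
    assume h: "(par ^^ (j - 1)) v = r"
    then have "(par ^^ j) v = r" using pj par_r by simp
    then have "(par ^^ i) u = (par ^^ (j - 1)) v" using h ij(2) by simp
    then have "tdist u v \<le> i + (j - 1)" by (rule tdist_le)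
    then show False using ij j1 by simp
  qed
  show ?thesis using ne r1 r2 pi pj ij(2) fpV uV vV unfolding ch_def by auto
qed

end

locale setting = rtree +
  fixes Q :: "'a set" and d k :: nat
  assumes rleaf: "card (ch r) = 1"
    and QL: "Q \<subseteq> leaves V E" and Qne: "Q \<noteq> {}"
    and maxQ: "\<And>l. l \<in> leaves V E \<Longrightarrow> l \<notin> Q \<Longrightarrow> \<exists>q\<in>Q. tdist l q < 2 * d"
    and d1: "1 \<le> d"
begin

definition W where "W = {v \<in> V. degree E v = 2}"
definition N where "N = (\<lambda>(l, j). (par ^^ j) l) ` (leaves V E \<times> {..<2*d})"
definition Y where "Y = {v \<in> V. \<forall>j\<le>k. (par ^^ j) v \<in> W}"
definition A where "A = {u \<in> V. \<exists>q\<in>Q. q \<in> D u}"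
definition qc where "qc u = card {c \<in> ch u. c \<in> A}"
definition A0 where "A0 = {u \<in> A. qc u = 0}"
definition A1 where "A1 = {u \<in> A. qc u = 1}"
definition A2 where "A2 = {u \<in> A. 2 \<le> qc u}"
definition M1 where "M1 = (\<lambda>(b, h). (par ^^ h) b) ` ((A0 \<union> A2) \<times> {..<2*d})"
definition M2 where "M2 = {u \<in> A. u \<noteq> r \<and> (\<exists>i. 1 \<le> i \<and> i < k + 2*d \<and> (par ^^ i) u \<in> A2 \<union> {r})}"
definition C where "C = {c \<in> A. c \<noteq> r \<and> par c \<in> A2 \<union> {r}}"

lemma W_iff: "v \<in> W \<longleftrightarrow> v \<in> V \<and> v \<noteq> r \<and> card (ch v) = 1"
  unfolding W_def using degree_eq rleaf by (cases "v = r") auto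

lemma leaf_iff: "v \<in> leaves V E \<longleftrightarrow> v \<in> V \<and> (v = r \<or> ch v = {})"
  unfolding leaves_def using degree_eq rleaf fin_ch rV by (cases "v = r") auto

lemma QV: "Q \<subseteq> V" using QL unfolding leaves_def by auto

lemma leafQ: "q \<in> Q \<Longrightarrow> q \<noteq> r \<Longrightarrow> ch q = {}"
  using QL leaf_iff by blast

lemma A_V: "A \<subseteq> V" unfolding A_def by auto

lemma A_up: "u \<in> A \<Longrightarrow> par u \<in> A"
  unfolding A_def using D_par parV by blast

lemma A_fp: "u \<in> A \<Longrightarrow> (par ^^ m) u \<in> A"
  by (induction m) (auto simp: A_up)

lemma A_D: "y \<in> A \<Longrightarrow> y \<in> D u \<Longrightarrow> u \<in> A"
  unfolding A_def using D_trans D_canon by blast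

lemma Q_A: "Q \<subseteq> A" unfolding A_def using QV D_self by blast

lemma rA: "r \<in> A"
proof -
  obtain q where "q \<in> Q" using Qne by blast
  then have "q \<in> D r" using QV fp_r[of q "dep q"] unfolding D_def by blast
  then show ?thesis using \<open>q \<in> Q\<close> rV unfolding A_def by blast
qed

lemma finA: "finite A" using A_V finV finite_subset by blast

lemma qc_le: "qc u \<le> card (ch u)"
  unfolding qc_def by (rule card_mono[OF fin_ch]) auto

lemma qc_pos: "c \<in> ch u \<Longrightarrow> c \<in> A \<Longrightarrow> 1 \<le> qc u"
proof -
  assume "c \<in> ch u" "c \<in> A"
  then have "c \<in> {c \<in> ch u. c \<in> A}" by simp
  moreover have "finite {c \<in> ch u. c \<in> A}" using fin_ch by simp
  ultimately have "card {c \<in> ch u. c \<in> A} \<noteq> 0" by (metis card_0_eq empty_iff)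
  then show ?thesis unfolding qc_def by simp
qed

lemma A0_Q: "u \<in> A0 \<Longrightarrow> u \<in> Q"
proof -
  assume u: "u \<in> A0"
  then obtain q where q: "q \<in> Q" "q \<in> D u" unfolding A0_def A_def by blast
  show "u \<in> Q"
  proof (cases "q = u")
    case True then show ?thesis using q by simp
  next
    case False
    then obtain c where "c \<in> ch u" "q \<in> D c" using D_child[OF q(2)] by blast
    then have "c \<in> A" "c \<in> ch u" using q(1) unfolding A_def ch_def by auto
    then have "1 \<le> qc u" by (rule qc_pos[rotated])
    then show ?thesis using u unfolding A0_def by simp
  qed
qed

lemma Q_A0: "q \<in> Q \<Longrightarrow> q \<noteq> r \<Longrightarrow> q \<in> A0"
proof -
  assume q: "q \<in> Q" "q \<noteq> r"
  have "qc q \<le> card (ch q)" by (rule qc_le)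
  then have "qc q = 0" using leafQ[OF q] by simp
  moreover have "q \<in> A" using Q_A q(1) by blast
  ultimately show ?thesis unfolding A0_def by simp
qed

lemma AW_A1: "u \<in> A \<Longrightarrow> u \<in> W \<Longrightarrow> qc u = 1"
proof -
  assume u: "u \<in> A" "u \<in> W"
  have w: "u \<in> V" "u \<noteq> r" "card (ch u) = 1" using u(2) W_iff by auto
  have "u \<notin> Q" using leafQ[of u] w by auto
  then have "u \<notin> A0" using A0_Q by blast
  then have "qc u \<noteq> 0" using u(1) unfolding A0_def by simp
  then show ?thesis using qc_le[of u] w by simp
qed

lemma rA2: "r \<notin> A2" using qc_le[of r] rleaf unfolding A2_def by simp

lemma sum_qc: "(\<Sum>u\<in>A. qc u) = card A - 1"
proof -
  have eq: "A - {r} = (\<Union>u\<in>A. {c \<in> ch u. c \<in> A})"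
  proof
    show "A - {r} \<subseteq> (\<Union>u\<in>A. {c \<in> ch u. c \<in> A})"
    proof
      fix c assume "c \<in> A - {r}"
      then have "c \<in> ch (par c)" "par c \<in> A" "c \<in> A" using A_up A_V unfolding ch_def by auto
      then show "c \<in> (\<Union>u\<in>A. {c \<in> ch u. c \<in> A})" by blast
    qed
    show "(\<Union>u\<in>A. {c \<in> ch u. c \<in> A}) \<subseteq> A - {r}" unfolding ch_def by auto
  qed
  have "card (A - {r}) = (\<Sum>u\<in>A. card {c \<in> ch u. c \<in> A})"
    unfolding eq
    by (rule card_UN_disjoint[OF finA]) (auto simp: fin_ch, auto simp: ch_def)
  then show ?thesis unfolding qc_def using rA finA by simp
qed

lemma count_A:
  shows "card A2 + 1 \<le> card A0" and "(\<Sum>u\<in>A2. qc u) + 2 \<le> 2 * card A0"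
proof -
  have fin0: "finite A0" "finite A1" "finite A2" using finA unfolding A0_def A1_def A2_def by auto
  have Aeq: "A = A0 \<union> A1 \<union> A2" unfolding A0_def A1_def A2_def by auto
  have d01: "A0 \<inter> A1 = {}" "(A0 \<union> A1) \<inter> A2 = {}" unfolding A0_def A1_def A2_def by auto
  have cA: "card A = card A0 + card A1 + card A2"
    using Aeq d01 fin0 by (simp add: card_Un_disjoint)
  have sA: "(\<Sum>u\<in>A. qc u) = (\<Sum>u\<in>A0. qc u) + (\<Sum>u\<in>A1. qc u) + (\<Sum>u\<in>A2. qc u)"
    using Aeq d01 fin0 by (simp add: sum.union_disjoint)
  have s0: "(\<Sum>u\<in>A0. qc u) = 0" unfolding A0_def by simp
  have s1: "(\<Sum>u\<in>A1. qc u) = card A1" unfolding A1_def by simp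
  have s2: "2 * card A2 \<le> (\<Sum>u\<in>A2. qc u)"
  proof -
    have "(\<Sum>u\<in>A2. (2::nat)) \<le> (\<Sum>u\<in>A2. qc u)" by (rule sum_mono) (simp add: A2_def)
    then show ?thesis by simp
  qed
  have pos: "1 \<le> card A" using rA finA by (metis One_nat_def Suc_leI card_gt_0_iff empty_iff)
  have key: "(\<Sum>u\<in>A2. qc u) + 1 = card A0 + card A2"
    using sum_qc sA s0 s1 cA pos by linarith
  show "card A2 + 1 \<le> card A0" using key s2 by linarith
  show "(\<Sum>u\<in>A2. qc u) + 2 \<le> 2 * card A0" using key s2 by linarith
qed

lemma card_C: "card C \<le> 2 * card A0"
proof -
  have sub: "C \<subseteq> (\<Union>a\<in>insert r A2. {c \<in> ch a. c \<in> A})"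
    unfolding C_def ch_def using A_V by auto
  have "card C \<le> card (\<Union>a\<in>insert r A2. {c \<in> ch a. c \<in> A})"
    by (rule card_mono[OF _ sub]) (simp add: fin_ch finA A2_def)
  also have "\<dots> \<le> (\<Sum>a\<in>insert r A2. card {c \<in> ch a. c \<in> A})" by (rule card_UN_le) (simp add: finA A2_def)
  also have "\<dots> = qc r + (\<Sum>a\<in>A2. qc a)" unfolding qc_def using rA2 finA by (simp add: A2_def)
  also have "\<dots> \<le> 1 + (\<Sum>a\<in>A2. qc a)" using qc_le[of r] rleaf by simp
  finally show ?thesis using count_A(2) by linarith
qed

end



context rtree
begin

lemma exit_wit:
  assumes lD: "l \<in> D w" and qV: "q \<in> V" and qD: "q \<notin> D w" and ij: "(par ^^ i) l = (par ^^ j) q"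
  shows "dep l - dep w < i"
proof (rule ccontr)
  have c: "w \<in> V" "l \<in> V" "dep w \<le> dep l" "(par ^^ (dep l - dep w)) l = w" using D_canon[OF lD] by auto
  assume "\<not> ?thesis"
  then have ile: "i \<le> dep l - dep w" by simp
  have "(par ^^ (dep l - dep w - i)) ((par ^^ i) l) = w"
    using c(4) ile by (metis funpow_add le_add_diff_inverse2 o_apply)
  then have "(par ^^ i) l \<in> D w" using fpV[OF c(2)] unfolding D_def by blast
  moreover have "q \<in> D ((par ^^ i) l)" using D_fp[OF qV, of j] ij by simp
  ultimately show False using D_trans qD by blast
qed

end

context setting
begin

lemma r_N: "r \<in> N"
proof -
  have "(r, 0) \<in> leaves V E \<times> {..<2*d}" using leaf_iff rV d1 by auto
  then show ?thesis unfolding N_def by (rule rev_image_eqI) simp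
qed

lemma notN_A:
  assumes wV: "w \<in> V" and wN: "w \<notin> N"
  shows "w \<in> A"
proof -
  have wr: "w \<noteq> r" using r_N wN by blast
  obtain l where l: "l \<in> D w" "l \<noteq> r" "ch l = {}" using D_deepest[OF wV wr] by blast
  have c: "w \<in> V" "l \<in> V" "dep w \<le> dep l" "(par ^^ (dep l - dep w)) l = w" using D_canon[OF l(1)] by auto
  have lL: "l \<in> leaves V E" using leaf_iff c(2) l(3) by simp
  have e: "2*d \<le> dep l - dep w"
  proof (rule ccontr)
    assume "\<not> 2*d \<le> dep l - dep w"
    then have "(l, dep l - dep w) \<in> leaves V E \<times> {..<2*d}" using lL by simp
    then have "w \<in> N" unfolding N_def using c(4) by force
    then show False using wN by simp
  qed
  show ?thesis
  proof (cases "l \<in> Q")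
    case True
    then show ?thesis using l(1) wV unfolding A_def by blast
  next
    case False
    obtain q where q: "q \<in> Q" "tdist l q < 2*d" using maxQ[OF lL False] by blast
    have qV: "q \<in> V" using q(1) QV by blast
    have "q \<in> D w"
    proof (rule ccontr)
      assume "q \<notin> D w"
      then have "dep l - dep w < tdist l q" by (rule tdist_exit[OF l(1) qV])
      then show False using e q by linarith
    qed
    then show ?thesis unfolding A_def using q wV by blast
  qed
qed

lemma card2: "y1 \<in> S \<Longrightarrow> y2 \<in> S \<Longrightarrow> y1 \<noteq> y2 \<Longrightarrow> finite S \<Longrightarrow> 2 \<le> card S"
proof -
  assume h: "y1 \<in> S" "y2 \<in> S" "y1 \<noteq> y2" "finite S"
  have "card {y1, y2} \<le> card S" using h by (intro card_mono) auto
  then show ?thesis using h(3) by simp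
qed

lemma cover:
  assumes wV: "w \<in> V" and wN: "w \<notin> N" and wY: "w \<notin> Y"
  shows "w \<in> M1 \<union> M2"
proof -
  have wr: "w \<noteq> r" using r_N wN by blast
  have wA: "w \<in> A" using notN_A[OF wV wN] .
  have ex: "\<exists>j. j \<le> k \<and> (par ^^ j) w \<notin> W" using wY wV unfolding Y_def by auto
  define j where "j = (LEAST j. j \<le> k \<and> (par ^^ j) w \<notin> W)"
  have jk: "j \<le> k" and sW: "(par ^^ j) w \<notin> W" using LeastI_ex[OF ex] unfolding j_def by auto
  have below: "(par ^^ m) w \<in> W" if "m < j" for m
  proof -
    have "\<not> (m \<le> k \<and> (par ^^ m) w \<notin> W)" using not_less_Least[of m] that unfolding j_def by blast
    then show ?thesis using that jk by simp
  qed
  define s where "s = (par ^^ j) w"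
  have sV: "s \<in> V" unfolding s_def using fpV[OF wV] .
  have sA: "s \<in> A" unfolding s_def using A_fp[OF wA] .
  have belowA1: "(par ^^ m) w \<in> A \<and> qc ((par ^^ m) w) = 1 \<and> (par ^^ m) w \<noteq> r
      \<and> card (ch ((par ^^ m) w)) = 1 \<and> (par ^^ m) w \<in> V" if "m < j" for m
    using below[OF that] A_fp[OF wA] AW_A1 W_iff by blast
  have M2I: "w \<in> M2" if "1 \<le> i" "i < k + 2*d" "(par ^^ i) w \<in> A2 \<union> {r}" for i
    unfolding M2_def using wA wr that by blast
  have M1I: "w \<in> M1" if "b \<in> A0 \<union> A2" "h < 2*d" "(par ^^ h) b = w" for b h
  proof -
    have "(b, h) \<in> (A0 \<union> A2) \<times> {..<2*d}" using that by simp
    then show ?thesis unfolding M1_def using that(3) by force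
  qed
  have jchild: "(par ^^ (j - 1)) w \<in> ch s \<and> (par ^^ (j - 1)) w \<in> A" if "1 \<le> j"
  proof -
    have b: "(par ^^ (j - 1)) w \<in> A" "(par ^^ (j - 1)) w \<noteq> r" "(par ^^ (j - 1)) w \<in> V"
      using belowA1[of "j - 1"] that by auto
    have "par ((par ^^ (j - 1)) w) = s" unfolding s_def using that
      by (metis Suc_diff_le diff_Suc_1 funpow.simps(2) o_apply)
    then show ?thesis using b unfolding ch_def by simp
  qed
  show ?thesis
  proof (cases "s = r")
    case True
    have "j \<noteq> 0"
    proof
      assume "j = 0"
      then have "s = w" unfolding s_def by simp
      then show False using True wr by simp
    qed
    then show ?thesis using M2I[of j] jk True d1 unfolding s_def by simp
  next
    case sr: False
    consider "qc s = 0" | "qc s = 1" | "2 \<le> qc s" by linarith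
    then show ?thesis
    proof cases
      case 1
      have "j = 0"
      proof (rule ccontr)
        assume "j \<noteq> 0"
        then have "1 \<le> j" by simp
        then have "1 \<le> qc s" using jchild qc_pos by blast
        then show False using 1 by simp
      qed
      then have "w \<in> A0" using sA 1 unfolding s_def A0_def by simp
      then show ?thesis using M1I[of w 0] d1 by simp
    next
      case 3
      show ?thesis
      proof (cases "j = 0")
        case True
        then have "w \<in> A2" using sA 3 unfolding s_def A2_def by simp
        then show ?thesis using M1I[of w 0] d1 by simp
      next
        case False
        then show ?thesis using M2I[of j] jk sA 3 d1 unfolding s_def A2_def by simp
      qed
    next
      case 2
      have chs: "card (ch s) \<noteq> 1" using sW sV sr W_iff unfolding s_def by auto
      obtain c' where c': "c' \<in> ch s" "c' \<notin> A"
      proof (rule ccontr)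
        assume "\<not> thesis"
        then have "\<forall>c\<in>ch s. c \<in> A" using that by blast
        then have "{c \<in> ch s. c \<in> A} = ch s" by auto
        then have "card (ch s) = 1" using 2 unfolding qc_def by simp
        then show False using chs by simp
      qed
      have c'V: "c' \<in> V" "c' \<noteq> r" "par c' = s" using c'(1) unfolding ch_def by auto
      obtain l where l: "l \<in> D c'" "l \<noteq> r" "ch l = {}" using D_deepest[OF c'V(1,2)] by blast
      have cl: "c' \<in> V" "l \<in> V" "dep c' \<le> dep l" "(par ^^ (dep l - dep c')) l = c'"
        using D_canon[OF l(1)] by auto
      have lL: "l \<in> leaves V E" using leaf_iff cl(2) l(3) by simp
      have lQ: "l \<notin> Q"
      proof
        assume "l \<in> Q"
        then have "c' \<in> A" unfolding A_def using c'V l(1) by blast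
        then show False using c' by simp
      qed
      obtain q where q: "q \<in> Q" "tdist l q < 2*d" using maxQ[OF lL lQ] by blast
      have qV: "q \<in> V" using q(1) QV by blast
      have qD': "q \<notin> D c'" using c' q(1) c'V unfolding A_def by blast
      obtain i1 i2 where w12: "i1 + i2 = tdist l q" "(par ^^ i1) l = (par ^^ i2) q" "i1 \<le> dep l" "i2 \<le> dep q"
        using tdist_wit[OF cl(2) qV] by blast
      define e where "e = dep l - dep c'"
      have ei1: "e < i1" unfolding e_def using exit_wit[OF l(1) qV qD' w12(2)] .
      define p1 where "p1 = i1 - Suc e"
      have i1eq: "i1 = p1 + Suc e" unfolding p1_def using ei1 by simp
      have ls: "(par ^^ Suc e) l = s" using cl(4) c'V(3) unfolding e_def by simp
      define x where "x = (par ^^ i1) l"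
      have xs: "x = (par ^^ p1) s" unfolding x_def i1eq funpow_add using ls by simp
      have dc': "1 \<le> dep c'" using c'V dep0 by (cases "dep c'") auto
      have dep_s: "dep s = dep l - Suc e" using fp_dep[OF cl(2), of "Suc e"] ls by simp
      have sle: "Suc e \<le> dep l" using dc' cl(3) unfolding e_def by linarith
      have p1le: "p1 \<le> dep s" using w12(3) i1eq dep_s sle by linarith
      have depx1: "dep x = dep s - p1" using fp_dep[OF sV, of p1] xs by simp
      have depx2: "dep x = dep q - i2" using fp_dep[OF qV, of i2] w12(2) unfolding x_def by simp
      have p1lt: "p1 < 2*d" using q(2) w12(1) i1eq by linarith
      show ?thesis
      proof (cases "q \<in> D s")
        case True
        define t where "t = dep q - dep s"
        have qs: "(par ^^ t) q = s" "dep s \<le> dep q" using D_canon[OF True] unfolding t_def by auto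
        have tlt: "t < 2*d" using depx1 depx2 w12(4) p1le q(2) w12(1) unfolding t_def by linarith
        have qr: "q \<noteq> r"
        proof
          assume "q = r"
          then have "dep s \<le> 0" using qs(2) dep_r by simp
          then show False using dep0[OF sV] sr by simp
        qed
        obtain a b where ab: "a + b = tdist w q" "(par ^^ a) w = (par ^^ b) q" "a \<le> dep w" "b \<le> dep q"
          using tdist_wit[OF wV qV] by blast
        have jdw: "j < dep w"
        proof (rule ccontr)
          assume "\<not> j < dep w"
          then have "s = r" unfolding s_def using fp_r[OF wV] by simp
          then show False using sr by simp
        qed
        have tle: "tdist w q \<le> j + t" using tdist_le[of j w t q] qs(1) unfolding s_def by simp
        have depeq: "dep w - a = dep q - b" using fp_dep[OF wV, of a] fp_dep[OF qV, of b] ab(2) by simp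
        have ds1: "dep s = dep w - j" unfolding s_def using fp_dep[OF wV] by simp
        have aj: "a \<le> j" and bt: "b \<le> t" using ab depeq ds1 qs(2) tle jdw unfolding t_def by linarith+
        show ?thesis
        proof (cases "a = 0")
          case True
          then have "(par ^^ b) q = w" using ab(2) by simp
          then show ?thesis using M1I[of q b] Q_A0[OF q(1) qr] bt tlt by simp
        next
          case a0: False
          show ?thesis
          proof (cases "b = 0")
            case True
            then have "(par ^^ a) w = q" using ab(2) by simp
            then have wq: "w \<in> D q" using D_fp[OF wV, of a] by simp
            have "w \<noteq> q"
            proof
              assume "w = q"
              then have "dep w - a = dep w" using depeq True by simp
              moreover have "1 \<le> dep w" using jdw by simp
              ultimately show False using a0 ab(3) by linarith
            qed
            then obtain c where "c \<in> ch q" using D_child[OF wq] by blast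
            then show ?thesis using leafQ[OF q(1) qr] by simp
          next
            case b0: False
            have mc: "(par ^^ (a - 1)) w \<noteq> (par ^^ (b - 1)) q \<and> (par ^^ (a - 1)) w \<in> ch ((par ^^ a) w)
                \<and> (par ^^ (b - 1)) q \<in> ch ((par ^^ a) w)"
              using meet_children[OF wV qV ab(1,2)] a0 b0 by simp
            have y1A: "(par ^^ (a - 1)) w \<in> A" using A_fp[OF wA] .
            have y2A: "(par ^^ (b - 1)) q \<in> A" using A_fp Q_A q(1) by blast
            show ?thesis
            proof (cases "a < j")
              case True
              then have c0: "card (ch ((par ^^ a) w)) = 1" using belowA1 by blast
              have c1: "(par ^^ (a - 1)) w \<in> ch ((par ^^ a) w)" using mc by simp
              have c2: "(par ^^ (b - 1)) q \<in> ch ((par ^^ a) w)" using mc by simp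
              have "(par ^^ (a - 1)) w = (par ^^ (b - 1)) q" using card1_eq[OF c0 c1 c2] .
              then show ?thesis using mc by simp
            next
              case False
              then have "(par ^^ a) w = s" using aj unfolding s_def by simp
              then have "card {c \<in> ch ((par ^^ a) w). c \<in> A} = 1" using 2 unfolding qc_def by simp
              moreover have "(par ^^ (a - 1)) w \<in> {c \<in> ch ((par ^^ a) w). c \<in> A}" using mc y1A by simp
              moreover have "(par ^^ (b - 1)) q \<in> {c \<in> ch ((par ^^ a) w). c \<in> A}" using mc y2A by simp
              ultimately have "(par ^^ (a - 1)) w = (par ^^ (b - 1)) q" by (rule card1_eq)
              then show ?thesis using mc by simp
            qed
          qed
        qed
      next
        case False
        have qDx: "q \<in> D x" unfolding x_def using D_fp[OF qV, of i2] w12(2) by simp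
        have p10: "p1 \<noteq> 0"
        proof
          assume "p1 = 0"
          then have "x = s" using xs by simp
          then show False using qDx False by simp
        qed
        have xA: "x \<in> A" unfolding xs using A_fp[OF sA] .
        have anc: "x \<in> A2 \<union> {r}"
        proof (cases "i2 = 0")
          case True
          then have xq: "x = q" using w12(2) unfolding x_def by simp
          have sDq: "s \<in> D q" using D_fp[OF sV, of p1] xs xq by simp
          have dsp: "1 \<le> dep s" using sr dep0[OF sV] by (cases "dep s") auto
          have "s \<noteq> q"
          proof
            assume "s = q"
            then have "dep s = dep s - p1" using depx1 xq by simp
            then show False using p10 p1le dsp by linarith
          qed
          then obtain c where "c \<in> ch q" using D_child[OF sDq] by blast
          then have "q = r" using leafQ[OF q(1)] by blast
          then show ?thesis using xq by simp
        next
          case i20: False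
          have i11: "1 \<le> i1" using i1eq by simp
          have mc: "(par ^^ (i1 - 1)) l \<noteq> (par ^^ (i2 - 1)) q \<and> (par ^^ (i1 - 1)) l \<in> ch ((par ^^ i1) l)
              \<and> (par ^^ (i2 - 1)) q \<in> ch ((par ^^ i1) l)"
            using meet_children[OF cl(2) qV w12(1,2) i11] i20 by simp
          have y1: "(par ^^ (i1 - 1)) l = (par ^^ (p1 - 1)) s"
          proof -
            have eq: "i1 - 1 = (p1 - 1) + Suc e" using i1eq p10 by simp
            have "(par ^^ (i1 - 1)) l = (par ^^ (p1 - 1)) ((par ^^ Suc e) l)"
              unfolding eq by (simp only: funpow_add comp_apply)
            then show ?thesis using ls by simp
          qed
          have y1A: "(par ^^ (i1 - 1)) l \<in> A" unfolding y1 using A_fp[OF sA] .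
          have y2A: "(par ^^ (i2 - 1)) q \<in> A" using A_fp Q_A q(1) by blast
          have yy: "(par ^^ (i1 - 1)) l \<in> {c \<in> ch x. c \<in> A}" "(par ^^ (i2 - 1)) q \<in> {c \<in> ch x. c \<in> A}"
              "(par ^^ (i1 - 1)) l \<noteq> (par ^^ (i2 - 1)) q" "finite {c \<in> ch x. c \<in> A}"
            using mc y1A y2A fin_ch unfolding x_def by auto
          have "2 \<le> card {c \<in> ch x. c \<in> A}" using card2[OF yy] .
          then show ?thesis using xA unfolding A2_def qc_def by simp
        qed
        have "(par ^^ (j + p1)) w = x" unfolding xs s_def by (simp only: add.commute[of j p1] funpow_add comp_apply)
        then show ?thesis using M2I[of "j + p1"] anc p10 jk p1lt by simp
      qed
    qed
  qed
qed

end



context setting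
begin

lemma finQ: "finite Q" using QV finV finite_subset by blast

lemma A0Q: "card A0 \<le> card Q" using A0_Q finQ by (intro card_mono) auto

lemma card_M1: "card M1 \<le> 4 * d * card Q"
proof -
  have fin: "finite (A0 \<union> A2)" using finA unfolding A0_def A2_def by auto
  have "card M1 \<le> card ((A0 \<union> A2) \<times> {..<2*d})" unfolding M1_def
    by (rule card_image_le) (rule finite_cartesian_product[OF fin], simp)
  also have "\<dots> = card (A0 \<union> A2) * (2*d)" by (simp add: card_cartesian_product)
  also have "\<dots> \<le> (card A0 + card A2) * (2*d)" by (intro mult_right_mono card_Un_le) simp
  also have "\<dots> \<le> (2 * card Q) * (2*d)" using count_A(1) A0Q by (intro mult_right_mono) simp_all
  finally show ?thesis by (simp add: algebra_simps)
qed

lemma card_N: "card N \<le> 2 * d * card (leaves V E)"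
proof -
  have fin: "finite (leaves V E)" using finV unfolding leaves_def by simp
  have "card N \<le> card (leaves V E \<times> {..<2*d})" unfolding N_def
    by (rule card_image_le) (rule finite_cartesian_product[OF fin], simp)
  also have "\<dots> = card (leaves V E) * (2*d)" by (simp add: card_cartesian_product)
  finally show ?thesis by (simp add: algebra_simps)
qed

lemma card_M2: "card M2 \<le> 2 * (k + 2*d) * card Q"
proof -
  define iu where "iu u = (LEAST i. 1 \<le> i \<and> (par ^^ i) u \<in> A2 \<union> {r})" for u
  define f where "f u = ((par ^^ (iu u - 1)) u, iu u)" for u
  have props: "1 \<le> iu u \<and> iu u < k + 2*d \<and> (par ^^ (iu u)) u \<in> A2 \<union> {r}
      \<and> (\<forall>m. 1 \<le> m \<and> m < iu u \<longrightarrow> (par ^^ m) u \<notin> A2 \<union> {r})" if "u \<in> M2" for u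
  proof -
    have "\<exists>i. 1 \<le> i \<and> i < k + 2*d \<and> (par ^^ i) u \<in> A2 \<union> {r}" using that unfolding M2_def by simp
    then obtain i where i: "1 \<le> i" "i < k + 2*d" "(par ^^ i) u \<in> A2 \<union> {r}" by blast
    have a: "1 \<le> iu u \<and> (par ^^ (iu u)) u \<in> A2 \<union> {r}"
      unfolding iu_def by (rule LeastI[of _ i]) (use i in simp)
    have b: "iu u \<le> i" unfolding iu_def by (rule Least_le) (use i in simp)
    have c: "\<forall>m. 1 \<le> m \<and> m < iu u \<longrightarrow> (par ^^ m) u \<notin> A2 \<union> {r}"
      using not_less_Least[where P = "\<lambda>i. 1 \<le> i \<and> (par ^^ i) u \<in> A2 \<union> {r}"] unfolding iu_def by blast
    show ?thesis using a b c i by simp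
  qed
  have uAV: "u \<in> A \<and> u \<noteq> r \<and> u \<in> V" if "u \<in> M2" for u using that A_V unfolding M2_def by auto
  have line: "(par ^^ m) u \<noteq> r \<and> (par ^^ m) u \<in> A \<and> (1 \<le> m \<longrightarrow> qc ((par ^^ m) u) = 1)"
    if u: "u \<in> M2" and m: "m < iu u" for u m
  proof (cases "m = 0")
    case True
    then show ?thesis using uAV[OF u] by simp
  next
    case False
    have nA: "(par ^^ m) u \<notin> A2 \<union> {r}" using props[OF u] False m by simp
    have mA: "(par ^^ m) u \<in> A" using A_fp uAV[OF u] by blast
    have cm: "(par ^^ (m - 1)) u \<noteq> r"
    proof (cases "m - 1 = 0")
      case True then show ?thesis using uAV[OF u] by simp
    next
      case False
      then have "1 \<le> m - 1" "m - 1 < iu u" using m by auto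
      then show ?thesis using props[OF u] by blast
    qed
    have pc: "par ((par ^^ (m - 1)) u) = (par ^^ m) u" using \<open>m \<noteq> 0\<close>
      by (metis Suc_diff_le diff_Suc_1 funpow.simps(2) o_apply less_one not_le)
    have "(par ^^ (m - 1)) u \<in> ch ((par ^^ m) u)" using cm pc fpV uAV[OF u] unfolding ch_def by auto
    then have "1 \<le> qc ((par ^^ m) u)" using qc_pos A_fp uAV[OF u] by blast
    moreover have "\<not> 2 \<le> qc ((par ^^ m) u)" using nA mA unfolding A2_def by auto
    ultimately show ?thesis using nA mA by simp
  qed
  have inj: "inj_on f M2"
  proof (rule inj_onI)
    fix u1 u2 assume u1: "u1 \<in> M2" and u2: "u2 \<in> M2" and fe: "f u1 = f u2"
    have ii: "iu u1 = iu u2" and cc: "(par ^^ (iu u1 - 1)) u1 = (par ^^ (iu u1 - 1)) u2"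
      using fe unfolding f_def by auto
    show "u1 = u2"
    proof (rule line_unique[where X = A1 and P = "\<lambda>x. x \<in> A" and t = "iu u1 - 1"])
      show "\<forall>x\<in>A1. \<forall>c1 c2. c1 \<in> ch x \<and> c2 \<in> ch x \<and> c1 \<in> A \<and> c2 \<in> A \<longrightarrow> c1 = c2"
      proof (intro ballI allI impI)
        fix x c1 c2 assume "x \<in> A1" "c1 \<in> ch x \<and> c2 \<in> ch x \<and> c1 \<in> A \<and> c2 \<in> A"
        then show "c1 = c2" using card1_eq[of "{c \<in> ch x. c \<in> A}" c1 c2] unfolding A1_def qc_def by auto
      qed
      show "u1 \<in> V" "u2 \<in> V" using uAV u1 u2 by auto
      show "(par ^^ (iu u1 - 1)) u1 = (par ^^ (iu u1 - 1)) u2" by (rule cc)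
      show "\<forall>m\<le>iu u1 - 1. (par ^^ m) u1 \<noteq> r \<and> (par ^^ m) u1 \<in> A"
        using line[OF u1] props[OF u1] by (metis One_nat_def Suc_pred le_imp_less_Suc less_le_trans order_refl)
      show "\<forall>m\<le>iu u1 - 1. (par ^^ m) u2 \<noteq> r \<and> (par ^^ m) u2 \<in> A"
        using line[OF u2] props[OF u2] ii by (metis One_nat_def Suc_pred le_imp_less_Suc less_le_trans order_refl)
      show "\<forall>m. 1 \<le> m \<and> m \<le> iu u1 - 1 \<longrightarrow> (par ^^ m) u1 \<in> A1 \<and> (par ^^ m) u2 \<in> A1"
      proof (intro allI impI)
        fix m assume m: "1 \<le> m \<and> m \<le> iu u1 - 1"
        then have m1: "m < iu u1" and m2: "m < iu u2" using props[OF u1] ii by auto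
        show "(par ^^ m) u1 \<in> A1 \<and> (par ^^ m) u2 \<in> A1"
          using line[OF u1 m1] line[OF u2 m2] m unfolding A1_def by simp
      qed
    qed
  qed
  have img: "f ` M2 \<subseteq> C \<times> {1..<k+2*d}"
  proof
    fix y assume "y \<in> f ` M2"
    then obtain u where u: "u \<in> M2" "y = f u" by blast
    have l: "(par ^^ (iu u - 1)) u \<noteq> r \<and> (par ^^ (iu u - 1)) u \<in> A"
      using line[OF u(1), of "iu u - 1"] props[OF u(1)] by simp
    have "par ((par ^^ (iu u - 1)) u) = (par ^^ (iu u)) u" using props[OF u(1)]
      by (metis Suc_diff_le diff_Suc_1 funpow.simps(2) o_apply)
    then have "(par ^^ (iu u - 1)) u \<in> C" using l props[OF u(1)] unfolding C_def by simp
    then show "y \<in> C \<times> {1..<k+2*d}" using props[OF u(1)] u(2) unfolding f_def by simp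
  qed
  have finC: "finite C" using finA unfolding C_def by simp
  have "card M2 = card (f ` M2)" using card_image[OF inj] by simp
  also have "\<dots> \<le> card (C \<times> {1..<k+2*d})" by (rule card_mono[OF _ img]) (simp add: finC)
  also have "\<dots> = card C * (k + 2*d - 1)" by (simp add: card_cartesian_product)
  also have "\<dots> \<le> (2 * card Q) * (k + 2*d)" using card_C A0Q by (intro mult_mono) simp_all
  finally show ?thesis by (simp add: algebra_simps)
qed

lemma count_V: "card V \<le> card N + card Y + card M1 + card M2"
proof -
  have sub: "V \<subseteq> N \<union> Y \<union> (M1 \<union> M2)" using cover by blast
  have fN: "finite N" unfolding N_def using finV unfolding leaves_def by simp
  have fY: "finite Y" unfolding Y_def using finV by simp
  have fM1: "finite M1" unfolding M1_def using finA unfolding A0_def A2_def by simp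
  have fM2: "finite M2" unfolding M2_def using finA by simp
  have "card V \<le> card (N \<union> Y \<union> (M1 \<union> M2))" by (rule card_mono) (use fN fY fM1 fM2 sub in auto)
  also have "\<dots> \<le> card (N \<union> Y) + card (M1 \<union> M2)" by (rule card_Un_le)
  also have "\<dots> \<le> card N + card Y + (card M1 + card M2)" by (intro add_mono card_Un_le)
  finally show ?thesis by simp
qed

lemma Y_props: "v \<in> Y \<Longrightarrow> i \<le> k \<Longrightarrow> (par ^^ i) v \<in> W \<and> i < dep v \<and> v \<in> V"
proof -
  assume v: "v \<in> Y" "i \<le> k"
  then have W: "(par ^^ i) v \<in> W" and vV: "v \<in> V" unfolding Y_def by auto
  have "i < dep v"
  proof (rule ccontr)
    assume "\<not> i < dep v"
    then have "(par ^^ i) v = r" using fp_r[OF vV] by simp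
    then show False using W W_iff by simp
  qed
  then show ?thesis using W vV by simp
qed

definition chn where "chn v = map (\<lambda>i. (par ^^ i) v) [0..<Suc k]"

lemma chn_nth: "i \<le> k \<Longrightarrow> chn v ! i = (par ^^ i) v"
  unfolding chn_def by (simp del: upt_Suc add: nth_upt less_Suc_eq_le)

lemma chn_len: "length (chn v) = Suc k" unfolding chn_def by simp

lemma chn_set: "set (chn v) = {(par ^^ i) v | i. i \<le> k}"
  unfolding chn_def by (auto simp del: upt_Suc simp: less_Suc_eq_le)

lemma chn_bare:
  assumes v: "v \<in> Y"
  shows "bare_path V E (chn v) \<and> path_len (chn v) = k"
proof -
  have vV: "v \<in> V" using Y_props[OF v, of 0] by simp
  have inj: "inj_on (\<lambda>i. (par ^^ i) v) {0..<Suc k}"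
  proof (rule inj_onI)
    fix a b assume a: "a \<in> {0..<Suc k}" and b: "b \<in> {0..<Suc k}" and e: "(par ^^ a) v = (par ^^ b) v"
    have "a < dep v" "b < dep v" using Y_props[OF v] a b by auto
    moreover have "dep v - a = dep v - b" using e fp_dep[OF vV] by metis
    ultimately show "a = b" by simp
  qed
  have dist: "distinct (chn v)" unfolding chn_def using inj by (simp only: distinct_map distinct_upt set_upt)
  have sv: "set (chn v) \<subseteq> V" unfolding chn_set using fpV[OF vV] by auto
  have adjs: "\<forall>i. Suc i < length (chn v) \<longrightarrow> adj E (chn v ! i) (chn v ! Suc i)"
  proof (intro allI impI)
    fix i assume "Suc i < length (chn v)"
    then have i: "Suc i \<le> k" using chn_len by simp
    have "i < dep v" using Y_props[OF v, of i] i by simp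
    then show "adj E (chn v ! i) (chn v ! Suc i)" using chn_nth i fp_adj[OF vV] by simp
  qed
  have degs: "\<forall>i. 0 < i \<and> i < length (chn v) - 1 \<longrightarrow> degree E (chn v ! i) = 2"
  proof (intro allI impI)
    fix i assume "0 < i \<and> i < length (chn v) - 1"
    then have i: "i \<le> k" using chn_len by simp
    then show "degree E (chn v ! i) = 2" using chn_nth Y_props[OF v i] unfolding W_def by simp
  qed
  have ne: "chn v \<noteq> []" using chn_len[of v] by (metis Zero_not_Suc list.size(3))
  have "is_path V E (chn v)" unfolding is_path_def using dist sv adjs ne by blast
  then show ?thesis unfolding bare_path_def path_len_def using degs chn_len[of v] by simp
qed

lemma chain_meet:
  assumes v1: "v1 \<in> Y" and v2: "v2 \<in> Y" and a: "a \<le> k" and ba: "b \<le> a"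
    and e: "(par ^^ a) v1 = (par ^^ b) v2"
  shows "(par ^^ (a - b)) v1 = v2"
proof (rule line_unique[where X = W and P = "\<lambda>_. True" and t = b])
  show "\<forall>x\<in>W. \<forall>c1 c2. c1 \<in> ch x \<and> c2 \<in> ch x \<and> True \<and> True \<longrightarrow> c1 = c2"
  proof (intro ballI allI impI)
    fix x c1 c2 assume "x \<in> W" "c1 \<in> ch x \<and> c2 \<in> ch x \<and> True \<and> True"
    then have "card (ch x) = 1" "c1 \<in> ch x" "c2 \<in> ch x" using W_iff by auto
    then show "c1 = c2" by (rule card1_eq)
  qed
  show "(par ^^ (a - b)) v1 \<in> V" using fpV Y_props[OF v1, of 0] by simp
  show "v2 \<in> V" using Y_props[OF v2, of 0] by simp
  have "(par ^^ b) ((par ^^ (a - b)) v1) = (par ^^ (b + (a - b))) v1" by (simp only: funpow_add comp_apply)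
  also have "b + (a - b) = a" using ba by simp
  finally show "(par ^^ b) ((par ^^ (a - b)) v1) = (par ^^ b) v2" using e by simp
  have W1: "(par ^^ m) ((par ^^ (a - b)) v1) \<in> W" if "m \<le> b" for m
  proof -
    have "(par ^^ m) ((par ^^ (a - b)) v1) = (par ^^ (m + (a - b))) v1" by (simp add: funpow_add)
    moreover have "m + (a - b) \<le> k" using that a ba by simp
    ultimately show ?thesis using Y_props[OF v1] by simp
  qed
  have W2: "(par ^^ m) v2 \<in> W" if "m \<le> b" for m using Y_props[OF v2, of m] that ba a by simp
  show "\<forall>m\<le>b. (par ^^ m) ((par ^^ (a - b)) v1) \<noteq> r \<and> True" using W1 W_iff by blast
  show "\<forall>m\<le>b. (par ^^ m) v2 \<noteq> r \<and> True" using W2 W_iff by blast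
  show "\<forall>m. 1 \<le> m \<and> m \<le> b \<longrightarrow> (par ^^ m) ((par ^^ (a - b)) v1) \<in> W \<and> (par ^^ m) v2 \<in> W"
    using W1 W2 by blast
qed

lemma mod_lemma: "(x + (\<delta>::nat)) mod m = x mod m \<Longrightarrow> \<delta> < m \<Longrightarrow> \<delta> = 0"
proof -
  assume h: "(x + \<delta>) mod m = x mod m" "\<delta> < m"
  then have "m dvd (x + \<delta>) - x" using mod_eq_dvd_iff_nat[of x "x + \<delta>" m] by simp
  then have "m dvd \<delta>" by simp
  then show ?thesis using h(2) by (metis dvd_imp_le not_le not_gr0)
qed

lemma Y_paths:
  "\<exists>P. finite P \<and> (\<forall>p\<in>P. bare_path V E p \<and> path_len p = k)
     \<and> (\<forall>p\<in>P. \<forall>q\<in>P. p \<noteq> q \<longrightarrow> set p \<inter> set q = {}) \<and> card Y \<le> (k+1) * card P"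
proof -
  define Yc where "Yc c = {v \<in> Y. dep v mod (k+1) = c}" for c
  have fY: "finite Y" unfolding Y_def using finV by simp
  have fYc: "finite (Yc c)" for c unfolding Yc_def using fY by simp
  have Yeq: "Y = (\<Union>c\<in>{..<k+1}. Yc c)" unfolding Yc_def by auto
  define mx where "mx = Max ((\<lambda>c. card (Yc c)) ` {..<k+1})"
  have "mx \<in> (\<lambda>c. card (Yc c)) ` {..<k+1}" unfolding mx_def by (rule Max_in) auto
  then obtain c0 where c0: "c0 < k+1" "card (Yc c0) = mx" by auto
  have le: "card (Yc c) \<le> mx" if "c < k+1" for c unfolding mx_def using that by (intro Max_ge) auto
  have "card Y \<le> (\<Sum>c\<in>{..<k+1}. card (Yc c))" unfolding Yeq by (rule card_UN_le) simp
  also have "\<dots> \<le> (k+1) * mx" using sum_bounded_above[of "{..<k+1}" "\<lambda>c. card (Yc c)" mx] le by simp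
  finally have cY: "card Y \<le> (k+1) * card (Yc c0)" using c0 by simp
  define P where "P = chn ` Yc c0"
  have injc: "inj_on chn (Yc c0)"
  proof (rule inj_onI)
    fix a b assume "chn a = chn b"
    then have "chn a ! 0 = chn b ! 0" by simp
    then show "a = b" using chn_nth[of 0] by simp
  qed
  have cP: "card P = card (Yc c0)" unfolding P_def using card_image[OF injc] .
  have bare: "\<forall>p\<in>P. bare_path V E p \<and> path_len p = k"
    unfolding P_def Yc_def using chn_bare by auto
  have disj: "\<forall>p\<in>P. \<forall>q\<in>P. p \<noteq> q \<longrightarrow> set p \<inter> set q = {}"
  proof (intro ballI impI)
    fix p q assume p: "p \<in> P" and q: "q \<in> P" and pq: "p \<noteq> q"
    obtain v1 v2 where v: "v1 \<in> Yc c0" "v2 \<in> Yc c0" "p = chn v1" "q = chn v2" using p q unfolding P_def by blast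
    have v12: "v1 \<noteq> v2" using pq v by auto
    show "set p \<inter> set q = {}"
    proof (rule ccontr)
      assume "set p \<inter> set q \<noteq> {}"
      then obtain a b where ab: "a \<le> k" "b \<le> k" "(par ^^ a) v1 = (par ^^ b) v2"
        unfolding v chn_set by blast
      have Y1: "v1 \<in> Y" and Y2: "v2 \<in> Y" and md: "dep v1 mod (k+1) = dep v2 mod (k+1)"
        using v unfolding Yc_def by auto
      have V1: "v1 \<in> V" and V2: "v2 \<in> V" using Y_props Y1 Y2 by blast+
      show False
      proof (cases "b \<le> a")
        case True
        have eq: "(par ^^ (a - b)) v1 = v2" using chain_meet[OF Y1 Y2 ab(1) True ab(3)] .
        have "a - b < dep v1" using Y_props[OF Y1, of "a - b"] ab by simp
        then have "dep v1 = dep v2 + (a - b)" using fp_dep[OF V1, of "a - b"] eq by simp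
        then have "a - b = 0" using md mod_lemma[of "dep v2" "a - b" "k+1"] ab by simp
        then show False using eq v12 by simp
      next
        case False
        have eq: "(par ^^ (b - a)) v2 = v1" using chain_meet[OF Y2 Y1 ab(2) _ ab(3)[symmetric]] False by simp
        have "b - a < dep v2" using Y_props[OF Y2, of "b - a"] ab by simp
        then have "dep v2 = dep v1 + (b - a)" using fp_dep[OF V2, of "b - a"] eq by simp
        then have "b - a = 0" using md mod_lemma[of "dep v1" "b - a" "k+1"] ab by simp
        then show False using False by simp
      qed
    qed
  qed
  have "finite P" unfolding P_def using fYc by simp
  moreover have "card Y \<le> (k+1) * card P" using cY cP by simp
  ultimately show ?thesis using bare disj by blast
qed

end



theorem lemma3p16:
  fixes V :: "'a set" and E :: "'a set set" and n k d :: nat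
  assumes "d \<ge> 1"
    and "n \<ge> 60 * k" and "k \<ge> 4 * d"
    and "tree V E" and "card V = n"
    and "real (card (leaves V E)) \<le> real n / (5 * real d)"
  shows "(\<exists>Q \<subseteq> leaves V E. separated V E (2 * d) Q \<and> real (card Q) \<ge> real n / (40 * real k))
       \<or> (\<exists>P. finite P \<and> (\<forall>p\<in>P. bare_path V E p \<and> path_len p = k)
              \<and> (\<forall>p\<in>P. \<forall>q\<in>P. p \<noteq> q \<longrightarrow> set p \<inter> set q = {})
              \<and> real (card P) \<ge> real n / (40 * real k))"
proof -
  note d1 = assms(1) and T = assms(4)
  have k4: "4 \<le> k" using assms(1,3) by linarith
  have n2: "2 \<le> card V" using assms(2,5) k4 by linarith
  have finV: "finite V" using T unfolding tree_def graph_def by simp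
  obtain v0 where v0: "v0 \<in> V" using n2 by fastforce
  obtain x where x: "x \<in> V" "x \<noteq> v0"
  proof -
    have "V \<noteq> {v0}"
    proof
      assume "V = {v0}"
      then have "card V = 1" by simp
      then show False using n2 by simp
    qed
    then show ?thesis using v0 that by blast
  qed
  obtain par0 dep0 where R0: "rtree V E v0 par0 dep0" using rooted_exists[OF T v0] by blast
  obtain r where rV: "r \<in> V" and rdeg: "degree E r = 1"
  proof -
    obtain l where l: "l \<in> rtree.D V par0 x" "l \<noteq> v0" "rtree.ch V v0 par0 l = {}"
      using rtree.D_deepest[OF R0 x] by blast
    have lV: "l \<in> V" using rtree.D_canon[OF R0 l(1)] by simp
    have "degree E l = 1" using rtree.degree_eq[OF R0 lV] l(2,3) by simp
    then show ?thesis using that lV by blast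
  qed
  obtain par dep where R: "rtree V E r par dep" using rooted_exists[OF T rV] by blast
  interpret R: rtree V E r par dep by (rule R)
  have rleaf: "card (R.ch r) = 1" using R.degree_eq[OF rV] rdeg by simp
  have rL: "r \<in> leaves V E" using rV rdeg unfolding leaves_def by simp
  have finL: "finite (leaves V E)" using finV unfolding leaves_def by simp
  define tsep where "tsep Q \<longleftrightarrow> (\<forall>u\<in>Q. \<forall>v\<in>Q. u \<noteq> v \<longrightarrow> 2 * d \<le> R.tdist u v)" for Q
  define F where "F = {Q. Q \<subseteq> leaves V E \<and> tsep Q}"
  have rF: "{r} \<in> F" unfolding F_def tsep_def using rL by simp
  have finF: "finite F"
  proof -
    have "F \<subseteq> Pow (leaves V E)" unfolding F_def by auto
    then show ?thesis using finL finite_subset by blast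
  qed
  define m where "m = Max (card ` F)"
  have "m \<in> card ` F" unfolding m_def using finF rF by (intro Max_in) auto
  then obtain Q where QF: "Q \<in> F" and Qm: "card Q = m" by blast
  have maxc: "card Q' \<le> card Q" if "Q' \<in> F" for Q'
    unfolding Qm m_def using finF that by (intro Max_ge) auto
  have QL: "Q \<subseteq> leaves V E" and tQ: "tsep Q" using QF unfolding F_def by auto
  have finQ: "finite Q" using QL finL finite_subset by blast
  have Qne: "Q \<noteq> {}"
  proof
    assume "Q = {}"
    then have "card {r} \<le> 0" using maxc[OF rF] by simp
    then show False by simp
  qed
  have maxQ: "\<exists>q\<in>Q. R.tdist l q < 2 * d" if lL: "l \<in> leaves V E" and lQ: "l \<notin> Q" for l
  proof (rule ccontr)
    assume "\<not> ?thesis"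
    then have far: "\<forall>q\<in>Q. 2 * d \<le> R.tdist l q" by auto
    have "tsep (insert l Q)" unfolding tsep_def
    proof (intro ballI impI)
      fix u v assume u: "u \<in> insert l Q" and v: "v \<in> insert l Q" and uv: "u \<noteq> v"
      show "2 * d \<le> R.tdist u v"
      proof (cases "u = l")
        case True
        then have "v \<in> Q" using v uv by simp
        then show ?thesis using far True by simp
      next
        case False
        then have uQ: "u \<in> Q" using u by simp
        show ?thesis
        proof (cases "v = l")
          case True
          then show ?thesis using far uQ R.tdist_sym by metis
        next
          case False
          then have "v \<in> Q" using v by simp
          then show ?thesis using tQ uQ uv unfolding tsep_def by blast
        qed
      qed
    qed
    then have "insert l Q \<in> F" using QL lL unfolding F_def by simp
    then have "card (insert l Q) \<le> card Q" by (rule maxc)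
    then show False using finQ lQ by simp
  qed
  have S: "setting V E r par dep Q d"
    unfolding setting_def setting_axioms_def using R rleaf QL Qne maxQ d1 by blast
  interpret S: setting V E r par dep Q d k by (rule S)
  show ?thesis
  proof (cases "real n / (40 * real k) \<le> real (card Q)")
    case True
    have "separated V E (2 * d) Q" unfolding separated_def
    proof (intro ballI impI)
      fix u v assume u: "u \<in> Q" and v: "v \<in> Q" and uv: "u \<noteq> v"
      have uV: "u \<in> V" and vV: "v \<in> V" using u v QL unfolding leaves_def by auto
      have "2 * d \<le> R.tdist u v" using tQ u v uv unfolding tsep_def by blast
      also have "\<dots> \<le> gdist V E u v" by (rule R.tdist_gdist[OF T uV vV])
      finally show "2 * d \<le> gdist V E u v" .
    qed
    then show ?thesis using QL True by blast
  next
    case False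
    have kpos: "0 < real k" using k4 by simp
    have h1: "40 * k * card Q < n"
    proof -
      have "real (card Q) < real n / (40 * real k)" using False by simp
      then have "real (card Q) * (40 * real k) < real n" using kpos by (simp add: pos_less_divide_eq)
      then have "real (40 * k * card Q) < real n" by (simp add: algebra_simps)
      then show ?thesis by linarith
    qed
    have h2: "5 * d * card (leaves V E) \<le> n"
    proof -
      have dpos: "0 < real d" using d1 by simp
      have "real (card (leaves V E)) * (5 * real d) \<le> real n"
        using assms(6) dpos by (simp add: pos_le_divide_eq)
      then have "real (5 * d * card (leaves V E)) \<le> real n" by (simp add: algebra_simps)
      then show ?thesis by linarith
    qed
    have h1': "40 * (k * card Q) < n" using h1 by (simp add: mult.assoc)
    have h2': "5 * (d * card (leaves V E)) \<le> n" using h2 by (simp add: mult.assoc)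
    have cV: "n \<le> card S.N + card S.Y + card S.M1 + card S.M2" using S.count_V assms(5) by simp
    have cN: "card S.N \<le> 2 * (d * card (leaves V E))" using S.card_N by (simp add: mult.assoc)
    have cM1: "card S.M1 \<le> 4 * d * card Q" by (rule S.card_M1)
    have cM2: "card S.M2 \<le> 2 * (k + 2*d) * card Q" by (rule S.card_M2)
    have e1: "2 * (k + 2*d) * card Q + 4 * d * card Q \<le> 4 * (k * card Q)"
    proof -
      have "2 * (k + 2*d) + 4 * d = 2 * k + 8 * d" by simp
      then have "2 * (k + 2*d) + 4 * d \<le> 4 * k" using assms(3) by linarith
      then have "(2 * (k + 2*d) + 4 * d) * card Q \<le> (4 * k) * card Q" by (rule mult_right_mono) simp
      then show ?thesis by (simp add: algebra_simps)
    qed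
    have Ybig: "n < 2 * card S.Y" using cV cN cM1 cM2 e1 h1' h2' by linarith
    obtain P where P: "finite P" "\<forall>p\<in>P. bare_path V E p \<and> path_len p = k"
      "\<forall>p\<in>P. \<forall>q\<in>P. p \<noteq> q \<longrightarrow> set p \<inter> set q = {}" "card S.Y \<le> (k+1) * card P"
      using S.Y_paths by blast
    have kP: "card P \<le> k * card P" using k4 by simp
    have P1: "(k+1) * card P = k * card P + card P" by (simp add: algebra_simps)
    have "n < 40 * (k * card P)" using Ybig P(4) P1 kP by linarith
    then have "real n < real (40 * (k * card P))" by (simp only: of_nat_less_iff)
    then have "real n < 40 * real k * real (card P)" by (simp add: mult.assoc)
    then have "real n / (40 * real k) \<le> real (card P)" using kpos by (simp add: divide_le_eq mult.commute)
    then show ?thesis using P(1,2,3) by blast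
  qed
qed


end
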